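(* There exists an infinite set $A\subseteq \mathbb{R}^{2}$ with the following two properties: (1) for every positive integer $n$ and every subset $P\subseteq A$ consisting of $n$ points, there exists a subset $P'\subseteq P$ with $|P'|\ge n/2$ such that no three points of $P'$ are collinear; (2) there is no partition $A = A_1\cup\cdots\cup A_m$ of $A$ into finitely many sets such that, for each $i$, no three points of $A_i$ are collinear. *)

theory Defs
  imports "HOL-Analysis.Analysis"
begin

definition no_three_collinear :: "(real^2) set \<Rightarrow> bool" where
  "no_three_collinear S \<longleftrightarrow>
     (\<forall>x\<in>S. \<forall>y\<in>S. \<forall>z\<in>S. x \<noteq> y \<and> y \<noteq> z \<and> x \<noteq> z \<longrightarrow> \<not> collinear {x, y, z})"

end

theory Submission
  imports Defs "HOL-Computational_Algebra.Polynomial" "HOL-Library.Ramsey"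
begin


definition Q :: "real \<Rightarrow> real \<Rightarrow> real^2" where
  "Q a b = vector [a + b, a*a + a*b + b*b]"

definition K :: "real^2 \<Rightarrow> real^2 \<Rightarrow> real^2 \<Rightarrow> real" where
  "K X Y Z = (Y$1 - X$1)*(Z$2 - X$2) - (Y$2 - X$2)*(Z$1 - X$1)"

lemma Q1[simp]: "Q a b $ 1 = a + b" and Q2[simp]: "Q a b $ 2 = a*a + a*b + b*b"
  by (simp_all add: Q_def)

lemma Q_sym: "Q a b = Q b a"
  by (simp add: vec_eq_iff forall_2 algebra_simps)

lemma Q_eq: "Q a b = Q c d \<longleftrightarrow> (a = c \<and> b = d \<or> a = d \<and> b = c)"
proof
  assume h: "Q a b = Q c d"
  then have s: "a + b = c + d" and q: "a*a + a*b + b*b = c*c + c*d + d*d"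
    by (metis Q1, metis Q2)
  have "b = c + d - a" using s by simp
  with q have "(a - c) * (a - d) = 0" by (simp add: algebra_simps)
  then show "a = c \<and> b = d \<or> a = d \<and> b = c" using s by auto
qed (auto simp: Q_sym)

lemma col2: fixes X Y Z :: "real^2"
  shows "collinear {X, Y, Z} \<longleftrightarrow> K X Y Z = 0"
proof -
  have e: "{X, Y, Z} = {Y, X, Z}" by auto
  have "collinear {X, Y, Z} \<longleftrightarrow> collinear {0, Y - X, Z - X}"
    unfolding e by (rule collinear_3) (simp add: NO_MATCH_def)
  also have "\<dots> \<longleftrightarrow> K X Y Z = 0"
  proof -
    define u where "u = Y - X"
    define v where "v = Z - X"
    have k: "K X Y Z = u$1 * v$2 - u$2 * v$1" by (simp add: K_def u_def v_def)
    have "collinear {0, u, v} \<longleftrightarrow> u$1 * v$2 - u$2 * v$1 = 0"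
    proof
      assume "collinear {0, u, v}"
      then have "u = 0 \<or> v = 0 \<or> (\<exists>c. v = c *\<^sub>R u)" by (simp add: collinear_lemma)
      then show "u$1 * v$2 - u$2 * v$1 = 0" by auto
    next
      assume h: "u$1 * v$2 - u$2 * v$1 = 0"
      show "collinear {0, u, v}"
      proof (cases "u = 0")
        case True then show ?thesis by (simp add: collinear_lemma)
      next
        case False
        then have "u$1 \<noteq> 0 \<or> u$2 \<noteq> 0" by (auto simp: vec_eq_iff forall_2)
        then have "\<exists>c. v = c *\<^sub>R u"
        proof
          assume "u$1 \<noteq> 0"
          then have "v = (v$1 / u$1) *\<^sub>R u" using h
            by (auto simp: vec_eq_iff forall_2 field_simps)
          then show ?thesis by blast
        next
          assume "u$2 \<noteq> 0"
          then have "v = (v$2 / u$2) *\<^sub>R u" using h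
            by (auto simp: vec_eq_iff forall_2 field_simps)
          then show ?thesis by blast
        qed
        then show ?thesis by (simp add: collinear_lemma)
      qed
    qed
    then show ?thesis by (simp add: k u_def v_def)
  qed
  finally show ?thesis .
qed

lemma K_neg12: "K Y X Z = - K X Y Z"
  by (simp add: K_def algebra_simps)
lemma K_neg23: "K X Z Y = - K X Y Z"
  by (simp add: K_def algebra_simps)
lemma K_swap12: "K X Y Z = 0 \<longleftrightarrow> K Y X Z = 0"
  by (simp only: K_neg12[of X Y Z] neg_equal_0_iff_equal)
lemma K_swap23: "K X Y Z = 0 \<longleftrightarrow> K X Z Y = 0"
  by (simp only: K_neg23[of X Y Z] neg_equal_0_iff_equal)

lemma K_tri: "K (Q a b) (Q b c) (Q a c) = 0"
  by (simp add: K_def algebra_simps)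

lemma quad_finite:
  assumes "\<not> (c2 = 0 \<and> c1 = 0 \<and> c0 = 0)"
  shows "finite {x::real. c2 * x^2 + c1 * x + c0 = 0}"
proof -
  have "[:c0, c1, c2:] \<noteq> 0" using assms by auto
  then have "finite {x. poly [:c0, c1, c2:] x = 0}" by (rule poly_roots_finite)
  moreover have "{x. c2 * x^2 + c1 * x + c0 = 0} = {x. poly [:c0, c1, c2:] x = 0}"
    by (rule Collect_cong) (simp add: algebra_simps power2_eq_square)
  ultimately show ?thesis by simp
qed

lemma LA:
  assumes "Y \<noteq> Z"
  shows "finite {x. K (Q x a) Y Z = 0}"
proof -
  define c2 where "c2 = Z$1 - Y$1"
  define c1 where "c1 = a*(Z$1 - Y$1) + (Y$2 - Z$2)"
  define c0 where "c0 = (Y$1 - a)*(Z$2 - a*a) - (Y$2 - a*a)*(Z$1 - a)"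
  have eq: "{x. K (Q x a) Y Z = 0} = {x. c2 * x^2 + c1 * x + c0 = 0}"
    by (rule Collect_cong) (simp add: K_def c2_def c1_def c0_def algebra_simps power2_eq_square)
  have "\<not> (c2 = 0 \<and> c1 = 0 \<and> c0 = 0)"
    using assms by (auto simp: vec_eq_iff forall_2 c2_def c1_def)
  then show ?thesis unfolding eq by (rule quad_finite)
qed

lemma LB:
  assumes "a \<noteq> b" "\<not> (a + b = c + d \<and> a * b = c * d)"
  shows "finite {x. K (Q x a) (Q x b) (Q c d) = 0}"
proof -
  define c1 where "c1 = (b - a)*(a+b-c-d)"
  define c0 where "c0 = (b - a) * (a*b + c*c + c*d + d*d - (a+b)*(c+d))"
  have eq: "{x. K (Q x a) (Q x b) (Q c d) = 0} = {x. 0 * x^2 + c1 * x + c0 = 0}"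
    by (rule Collect_cong) (simp add: K_def c1_def c0_def algebra_simps power2_eq_square)
  have "\<not> (0 = (0::real) \<and> c1 = 0 \<and> c0 = 0)"
  proof
    assume h: "0 = (0::real) \<and> c1 = 0 \<and> c0 = 0"
    then have s: "a + b = c + d" using assms by (auto simp: c1_def)
    with h assms have "a*b + c*c + c*d + d*d - (c+d)*(c+d) = 0" by (auto simp: c0_def)
    then have "a * b = c * d" by (simp add: algebra_simps)
    with s assms show False by auto
  qed
  then show ?thesis unfolding eq by (rule quad_finite)
qed

lemma LC:
  assumes "a \<noteq> b" "a \<noteq> c" "b \<noteq> c"
  shows "K (Q x a) (Q x b) (Q x c) \<noteq> 0"
proof -
  have "K (Q x a) (Q x b) (Q x c) = (b - a) * (c - a) * (c - b)"
    by (simp add: K_def algebra_simps)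
  then show ?thesis using assms by simp
qed



definition cr :: "nat set \<Rightarrow> nat \<times> nat \<Rightarrow> bool" where
  "cr S e \<longleftrightarrow> ((fst e \<in> S) \<noteq> (snd e \<in> S))"

lemma cut_lemma:
  assumes "finite V"
  shows "E \<subseteq> V \<times> V \<Longrightarrow> (\<forall>e\<in>E. fst e \<noteq> snd e) \<Longrightarrow>
         \<exists>S. card E \<le> 2 * card {e\<in>E. cr S e}"
  using assms
proof (induction V arbitrary: E rule: finite_induct)
  case empty
  then show ?case by auto
next
  case (insert v V)
  define E0 where "E0 = {e\<in>E. fst e \<noteq> v \<and> snd e \<noteq> v}"
  define Ev where "Ev = E - E0"
  have finE: "finite E"
    using insert.prems(1) insert.hyps(1) finite_subset by blast
  have E0sub: "E0 \<subseteq> V \<times> V" using insert.prems(1) by (auto simp: E0_def)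
  obtain S0 where S0: "card E0 \<le> 2 * card {e\<in>E0. cr S0 e}"
    using insert.IH[OF E0sub] insert.prems(2) by (auto simp: E0_def)
  define S1 where "S1 = S0 - {v}"
  define S2 where "S2 = insert v S1"
  have same1: "cr S1 e = cr S0 e" if "e \<in> E0" for e
    using that by (auto simp: cr_def S1_def E0_def)
  have same2: "cr S2 e = cr S0 e" if "e \<in> E0" for e
    using that by (auto simp: cr_def S1_def S2_def E0_def)
  have opp: "cr S2 e \<longleftrightarrow> \<not> cr S1 e" if "e \<in> Ev" for e
    using that insert.prems(2) by (auto simp: cr_def S1_def S2_def E0_def Ev_def)
  have finE0: "finite E0" "finite Ev" using finE by (auto simp: E0_def Ev_def)
  have EU: "E = E0 \<union> Ev" "E0 \<inter> Ev = {}" by (auto simp: E0_def Ev_def)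
  have cE: "card E = card E0 + card Ev" using card_Un_disjoint[OF finE0 EU(2)] EU(1) by simp
  have split: "{e\<in>E. cr S e} = {e\<in>E0. cr S e} \<union> {e\<in>Ev. cr S e}" for S
    using EU by auto
  have cS: "card {e\<in>E. cr S e} = card {e\<in>E0. cr S e} + card {e\<in>Ev. cr S e}" for S
    unfolding split by (rule card_Un_disjoint) (use finE0 EU in auto)
  have c1: "card {e\<in>E0. cr S1 e} = card {e\<in>E0. cr S0 e}"
    by (rule arg_cong[where f=card]) (use same1 in auto)
  have c2: "card {e\<in>E0. cr S2 e} = card {e\<in>E0. cr S0 e}"
    by (rule arg_cong[where f=card]) (use same2 in auto)
  have "{e\<in>Ev. cr S2 e} = Ev - {e\<in>Ev. cr S1 e}" using opp by auto
  then have cv: "card {e\<in>Ev. cr S1 e} + card {e\<in>Ev. cr S2 e} = card Ev"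
    using finE0(2) by (simp add: card_Diff_subset card_mono)
  have "card E \<le> card {e\<in>E. cr S1 e} + card {e\<in>E. cr S2 e}"
    using cS[of S1] cS[of S2] c1 c2 cv cE S0 by linarith
  then have "card E \<le> 2 * card {e\<in>E. cr S1 e} \<or> card E \<le> 2 * card {e\<in>E. cr S2 e}"
    by linarith
  then show ?case
  proof
    assume "card E \<le> 2 * card {e\<in>E. cr S1 e}" then show ?case by (rule exI)
  next
    assume "card E \<le> 2 * card {e\<in>E. cr S2 e}" then show ?case by (rule exI)
  qed
qed

definition tri :: "nat \<times> nat \<Rightarrow> nat \<times> nat \<Rightarrow> nat \<times> nat \<Rightarrow> bool" where
  "tri e1 e2 e3 \<longleftrightarrow> (\<exists>x y z. x < y \<and> y < z \<and> {e1, e2, e3} = {(x, y), (y, z), (x, z)})"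

definition valid :: "nat \<Rightarrow> nat \<Rightarrow> nat \<Rightarrow> nat \<Rightarrow> nat \<Rightarrow> nat \<Rightarrow> nat \<Rightarrow> bool" where
  "valid n a b c d e f \<longleftrightarrow> a < b \<and> b < n \<and> c < d \<and> d < n \<and> e < f \<and> f < n \<and>
     (a,b) \<noteq> (c,d) \<and> (c,d) \<noteq> (e,f) \<and> (a,b) \<noteq> (e,f) \<and> \<not> tri (a,b) (c,d) (e,f)"

definition good :: "nat \<Rightarrow> (nat \<Rightarrow> real) \<Rightarrow> bool" where
  "good n t \<longleftrightarrow> inj_on t {..<n} \<and>
     (\<forall>a b c d e f. valid n a b c d e f \<longrightarrow>
        K (Q (t a) (t b)) (Q (t c) (t d)) (Q (t e) (t f)) \<noteq> 0)"

lemma Q_ne: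
  fixes a b c d :: nat
  assumes "inj_on t N" "a < b" "c < d" "a \<in> N" "b \<in> N" "c \<in> N" "d \<in> N" "(a,b) \<noteq> (c,d)"
  shows "Q (t a) (t b) \<noteq> Q (t c) (t d)"
proof
  assume "Q (t a) (t b) = Q (t c) (t d)"
  then have "t a = t c \<and> t b = t d \<or> t a = t d \<and> t b = t c" by (simp only: Q_eq)
  then have "a = c \<and> b = d \<or> a = d \<and> b = c"
    using assms(1,4-7) by (metis inj_on_eq_iff)
  then show False using assms(2,3,8) by auto
qed

lemma Q_of_sp:
  fixes a b c d :: real
  assumes "a + b = c + d" "a * b = c * d"
  shows "Q a b = Q c d"
proof -
  have e1: "a*a + a*b + b*b = (a+b)*(a+b) - a*b" by (simp add: algebra_simps)
  have e2: "c*c + c*d + d*d = (c+d)*(c+d) - c*d" by (simp add: algebra_simps)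
  show ?thesis using assms e1 e2 by (simp add: vec_eq_iff forall_2)
qed

lemma K_p1: "K X Y Z = 0 \<Longrightarrow> K Y X Z = 0" using K_swap12 by blast
lemma K_p2: "K X Y Z = 0 \<Longrightarrow> K X Z Y = 0" using K_swap23 by blast
lemma K_rot: "K X Y Z = 0 \<Longrightarrow> K Z X Y = 0" using K_swap12 K_swap23 by blast
lemma K_rot2: "K X Y Z = 0 \<Longrightarrow> K Y Z X = 0" using K_swap12 K_swap23 by blast

lemma core:
  assumes g: "good n t" and v: "valid (Suc n) a b c d e f"
  shows "finite {x. x \<notin> t ` {..<n} \<and>
     K (Q ((t(n:=x)) a) ((t(n:=x)) b)) (Q ((t(n:=x)) c) ((t(n:=x)) d)) (Q ((t(n:=x)) e) ((t(n:=x)) f)) = 0}"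
    (is "finite ?B")
proof -
  have inj: "inj_on t {..<n}" using g by (simp add: good_def)
  have vv: "a < b" "b \<le> n" "c < d" "d \<le> n" "e < f" "f \<le> n"
    "(a,b) \<noteq> (c,d)" "(c,d) \<noteq> (e,f)" "(a,b) \<noteq> (e,f)" "\<not> tri (a,b) (c,d) (e,f)"
    using v by (auto simp: valid_def)
  have an: "a < n" "c < n" "e < n" using vv by auto
  have ann: "a \<noteq> n" "c \<noteq> n" "e \<noteq> n" using an by auto
  consider "b < n" "d < n" "f < n"
    | "b = n" "d < n" "f < n" | "b < n" "d = n" "f < n" | "b < n" "d < n" "f = n"
    | "b = n" "d = n" "f < n" | "b = n" "d < n" "f = n" | "b < n" "d = n" "f = n"
    | "b = n" "d = n" "f = n"
  proof -
    have "b < n \<or> b = n" "d < n \<or> d = n" "f < n \<or> f = n" using vv by auto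
    then show ?thesis using that by blast
  qed
  then show ?thesis
  proof cases
    case 1
    then have "valid n a b c d e f" using v by (auto simp: valid_def)
    then have "K (Q (t a) (t b)) (Q (t c) (t d)) (Q (t e) (t f)) \<noteq> 0"
      using g by (auto simp: good_def)
    moreover have nn: "b \<noteq> n" "d \<noteq> n" "f \<noteq> n" using 1 by auto
    ultimately have "?B = {}" by (simp only: fun_upd_apply ann nn if_False) simp
    then show ?thesis by (simp only: finite.emptyI)
  next
    case 2
    have ne: "Q (t c) (t d) \<noteq> Q (t e) (t f)"
      by (rule Q_ne[OF inj]) (use vv 2 in auto)
    have nn: "d \<noteq> n" "f \<noteq> n" using 2 by auto
    have "?B \<subseteq> {x. K (Q x (t a)) (Q (t c) (t d)) (Q (t e) (t f)) = 0}"
    proof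
      fix x assume "x \<in> ?B"
      then have "K (Q (t a) x) (Q (t c) (t d)) (Q (t e) (t f)) = 0" using 2 ann nn by simp
      then show "x \<in> {x. K (Q x (t a)) (Q (t c) (t d)) (Q (t e) (t f)) = 0}"
        by (simp add: Q_sym[of "t a" x])
    qed
    then show ?thesis using LA[OF ne] finite_subset by blast
  next
    case 3
    have ne: "Q (t a) (t b) \<noteq> Q (t e) (t f)"
      by (rule Q_ne[OF inj]) (use vv 3 in auto)
    have nn: "b \<noteq> n" "f \<noteq> n" using 3 by auto
    have "?B \<subseteq> {x. K (Q x (t c)) (Q (t a) (t b)) (Q (t e) (t f)) = 0}"
    proof
      fix x assume "x \<in> ?B"
      then have "K (Q (t a) (t b)) (Q (t c) x) (Q (t e) (t f)) = 0" using 3 ann nn by simp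
      then have "K (Q (t c) x) (Q (t a) (t b)) (Q (t e) (t f)) = 0" by (rule K_p1)
      then show "x \<in> {x. K (Q x (t c)) (Q (t a) (t b)) (Q (t e) (t f)) = 0}"
        by (simp add: Q_sym[of "t c" x])
    qed
    then show ?thesis using LA[OF ne] finite_subset by blast
  next
    case 4
    have ne: "Q (t a) (t b) \<noteq> Q (t c) (t d)"
      by (rule Q_ne[OF inj]) (use vv 4 in auto)
    have nn: "b \<noteq> n" "d \<noteq> n" using 4 by auto
    have "?B \<subseteq> {x. K (Q x (t e)) (Q (t a) (t b)) (Q (t c) (t d)) = 0}"
    proof
      fix x assume "x \<in> ?B"
      then have "K (Q (t a) (t b)) (Q (t c) (t d)) (Q (t e) x) = 0" using 4 ann nn by simp
      then have "K (Q (t e) x) (Q (t a) (t b)) (Q (t c) (t d)) = 0" by (rule K_rot)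
      then show "x \<in> {x. K (Q x (t e)) (Q (t a) (t b)) (Q (t c) (t d)) = 0}"
        by (simp add: Q_sym[of "t e" x])
    qed
    then show ?thesis using LA[OF ne] finite_subset by blast
  next
    case 5
    have ac: "t a \<noteq> t c" using inj vv 5 an by (auto simp: inj_on_def)
    have nsp: "\<not> (t a + t c = t e + t f \<and> t a * t c = t e * t f)"
    proof
      assume "t a + t c = t e + t f \<and> t a * t c = t e * t f"
      then have "Q (t a) (t c) = Q (t e) (t f)" by (intro Q_of_sp) auto
      then have "(t a = t e \<and> t c = t f) \<or> (t a = t f \<and> t c = t e)" by (simp only: Q_eq)
      then have "(a = e \<and> c = f) \<or> (a = f \<and> c = e)"
        using inj vv 5 an by (metis inj_on_eq_iff lessThan_iff)
      then have "{(a,b),(c,d),(e,f)} = {(e,f),(f,n),(e,n)}" using 5 by auto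
      moreover have "e < f" "f < n" using vv 5 by auto
      ultimately have "tri (a,b) (c,d) (e,f)" unfolding tri_def by blast
      then show False using vv by simp
    qed
    have nn: "f \<noteq> n" using 5 by auto
    have "?B \<subseteq> {x. K (Q x (t a)) (Q x (t c)) (Q (t e) (t f)) = 0}"
    proof
      fix x assume "x \<in> ?B"
      then have "K (Q (t a) x) (Q (t c) x) (Q (t e) (t f)) = 0" using 5 ann nn by simp
      then show "x \<in> {x. K (Q x (t a)) (Q x (t c)) (Q (t e) (t f)) = 0}"
        by (simp add: Q_sym[of "t a" x] Q_sym[of "t c" x])
    qed
    then show ?thesis using LB[OF ac nsp] finite_subset by blast
  next
    case 6
    have ae: "t a \<noteq> t e" using inj vv 6 an by (auto simp: inj_on_def)
    have nsp: "\<not> (t a + t e = t c + t d \<and> t a * t e = t c * t d)"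
    proof
      assume "t a + t e = t c + t d \<and> t a * t e = t c * t d"
      then have "Q (t a) (t e) = Q (t c) (t d)" by (intro Q_of_sp) auto
      then have "(t a = t c \<and> t e = t d) \<or> (t a = t d \<and> t e = t c)" by (simp only: Q_eq)
      then have "(a = c \<and> e = d) \<or> (a = d \<and> e = c)"
        using inj vv 6 an by (metis inj_on_eq_iff lessThan_iff)
      then have "{(a,b),(c,d),(e,f)} = {(c,d),(d,n),(c,n)}" using 6 by auto
      moreover have "c < d" "d < n" using vv 6 by auto
      ultimately have "tri (a,b) (c,d) (e,f)" unfolding tri_def by blast
      then show False using vv by simp
    qed
    have nn: "d \<noteq> n" using 6 by auto
    have "?B \<subseteq> {x. K (Q x (t a)) (Q x (t e)) (Q (t c) (t d)) = 0}"
    proof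
      fix x assume "x \<in> ?B"
      then have "K (Q (t a) x) (Q (t c) (t d)) (Q (t e) x) = 0" using 6 ann nn by simp
      then have "K (Q (t a) x) (Q (t e) x) (Q (t c) (t d)) = 0" by (rule K_p2)
      then show "x \<in> {x. K (Q x (t a)) (Q x (t e)) (Q (t c) (t d)) = 0}"
        by (simp add: Q_sym[of "t a" x] Q_sym[of "t e" x])
    qed
    then show ?thesis using LB[OF ae nsp] finite_subset by blast
  next
    case 7
    have ce: "t c \<noteq> t e" using inj vv 7 an by (auto simp: inj_on_def)
    have nsp: "\<not> (t c + t e = t a + t b \<and> t c * t e = t a * t b)"
    proof
      assume "t c + t e = t a + t b \<and> t c * t e = t a * t b"
      then have "Q (t c) (t e) = Q (t a) (t b)" by (intro Q_of_sp) auto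
      then have "(t c = t a \<and> t e = t b) \<or> (t c = t b \<and> t e = t a)" by (simp only: Q_eq)
      then have "(c = a \<and> e = b) \<or> (c = b \<and> e = a)"
        using inj vv 7 an by (metis inj_on_eq_iff lessThan_iff)
      then have "{(a,b),(c,d),(e,f)} = {(a,b),(b,n),(a,n)}" using 7 by auto
      moreover have "a < b" "b < n" using vv 7 by auto
      ultimately have "tri (a,b) (c,d) (e,f)" unfolding tri_def by blast
      then show False using vv by simp
    qed
    have nn: "b \<noteq> n" using 7 by auto
    have "?B \<subseteq> {x. K (Q x (t c)) (Q x (t e)) (Q (t a) (t b)) = 0}"
    proof
      fix x assume "x \<in> ?B"
      then have "K (Q (t a) (t b)) (Q (t c) x) (Q (t e) x) = 0" using 7 ann nn by simp
      then have "K (Q (t c) x) (Q (t e) x) (Q (t a) (t b)) = 0" by (rule K_rot2)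
      then show "x \<in> {x. K (Q x (t c)) (Q x (t e)) (Q (t a) (t b)) = 0}"
        by (simp add: Q_sym[of "t c" x] Q_sym[of "t e" x])
    qed
    then show ?thesis using LB[OF ce nsp] finite_subset by blast
  next
    case 8
    have d3: "t a \<noteq> t c" "t a \<noteq> t e" "t c \<noteq> t e" using inj vv 8 an by (auto simp: inj_on_def)
    have "?B = {}"
    proof (rule equals0I)
      fix x assume "x \<in> ?B"
      then have "K (Q (t a) x) (Q (t c) x) (Q (t e) x) = 0" using 8 ann by simp
      then have "K (Q x (t a)) (Q x (t c)) (Q x (t e)) = 0"
        by (simp add: Q_sym[of "t a" x] Q_sym[of "t c" x] Q_sym[of "t e" x])
      then show False using LC[OF d3] by blast
    qed
    then show ?thesis by (simp only: finite.emptyI)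
  qed
qed



lemma extend:
  assumes g: "good n t"
  shows "\<exists>x. good (Suc n) (t(n:=x))"
proof -
  define B where "B = (\<Union>a\<in>{..n}. \<Union>b\<in>{..n}. \<Union>c\<in>{..n}. \<Union>d\<in>{..n}. \<Union>e\<in>{..n}. \<Union>f\<in>{..n}.
     {x. valid (Suc n) a b c d e f \<and> x \<notin> t ` {..<n} \<and>
     K (Q ((t(n:=x)) a) ((t(n:=x)) b)) (Q ((t(n:=x)) c) ((t(n:=x)) d)) (Q ((t(n:=x)) e) ((t(n:=x)) f)) = 0})"
  have fin: "finite {x. valid (Suc n) a b c d e f \<and> x \<notin> t ` {..<n} \<and>
     K (Q ((t(n:=x)) a) ((t(n:=x)) b)) (Q ((t(n:=x)) c) ((t(n:=x)) d)) (Q ((t(n:=x)) e) ((t(n:=x)) f)) = 0}"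
    for a b c d e f
  proof (cases "valid (Suc n) a b c d e f")
    case True
    then show ?thesis using core[OF g True] by (simp only: simp_thms)
  next
    case False
    then show ?thesis by simp
  qed
  have "finite B" unfolding B_def by (intro finite_UN_I finite_atMost fin)
  then have "finite (B \<union> t ` {..<n})" by simp
  then obtain x where x: "x \<notin> B \<union> t ` {..<n}"
    using ex_new_if_finite[OF infinite_UNIV_char_0] by blast
  have inj: "inj_on t {..<n}" using g by (simp add: good_def)
  have inj2: "inj_on (t(n:=x)) {..<n}"
    using inj by (subst inj_on_cong[where g = t]) auto
  have img: "(t(n:=x)) ` {..<n} = t ` {..<n}" by (auto simp: fun_upd_image)
  have "inj_on (t(n:=x)) (insert n {..<n})"
    using inj2 x img by (simp add: inj_on_insert)
  then have i3: "inj_on (t(n:=x)) {..<Suc n}" by (simp add: lessThan_Suc)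
  have k3: "K (Q ((t(n:=x)) a) ((t(n:=x)) b)) (Q ((t(n:=x)) c) ((t(n:=x)) d)) (Q ((t(n:=x)) e) ((t(n:=x)) f)) \<noteq> 0"
    if v: "valid (Suc n) a b c d e f" for a b c d e f
  proof
    assume h: "K (Q ((t(n:=x)) a) ((t(n:=x)) b)) (Q ((t(n:=x)) c) ((t(n:=x)) d)) (Q ((t(n:=x)) e) ((t(n:=x)) f)) = 0"
    have le: "a \<le> n" "b \<le> n" "c \<le> n" "d \<le> n" "e \<le> n" "f \<le> n" using v by (auto simp: valid_def)
    have xt: "x \<notin> t ` {..<n}" using x by blast
    have mem: "x \<in> {x. valid (Suc n) a b c d e f \<and> x \<notin> t ` {..<n} \<and>
     K (Q ((t(n:=x)) a) ((t(n:=x)) b)) (Q ((t(n:=x)) c) ((t(n:=x)) d)) (Q ((t(n:=x)) e) ((t(n:=x)) f)) = 0}"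
      using v xt h by (simp only: mem_Collect_eq simp_thms)
    have "x \<in> B" unfolding B_def UN_iff
      using le mem by blast
    then show False using x by blast
  qed
  have "good (Suc n) (t(n:=x))" unfolding good_def using i3 k3 by blast
  then show ?thesis by blast
qed

primrec sq :: "nat \<Rightarrow> nat \<Rightarrow> real" where
  "sq 0 = (\<lambda>_. 0)"
| "sq (Suc n) = (sq n)(n := (SOME x. good (Suc n) ((sq n)(n := x))))"

lemma good_sq: "good n (sq n)"
proof (induction n)
  case 0
  then show ?case by (simp add: good_def valid_def)
next
  case (Suc n)
  show ?case unfolding sq.simps(2) by (rule someI_ex[OF extend[OF Suc.IH]])
qed

lemma sq_stable: "k < n \<Longrightarrow> sq n k = sq (Suc k) k"
proof (induction n)
  case 0 then show ?case by simp
next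
  case (Suc n)
  show ?case
  proof (cases "k = n")
    case True then show ?thesis by simp
  next
    case False
    then have "k < n" using Suc.prems by simp
    then show ?thesis using Suc.IH False by simp
  qed
qed

definition T :: "nat \<Rightarrow> real" where "T k = sq (Suc k) k"

lemma sq_T: "k < N \<Longrightarrow> sq N k = T k"
  by (simp add: T_def sq_stable)

lemma T_inj: "inj T"
proof (rule injI)
  fix i j assume h: "T i = T j"
  define N where "N = Suc (i + j)"
  have "i < N" "j < N" by (auto simp: N_def)
  moreover have "inj_on (sq N) {..<N}" using good_sq[of N] by (simp add: good_def)
  ultimately show "i = j" using h sq_T[of i N] sq_T[of j N] by (metis inj_on_eq_iff lessThan_iff)
qed

lemma T_gen:
  assumes "a < b" "c < d" "e < f" "(a,b) \<noteq> (c,d)" "(c,d) \<noteq> (e,f)" "(a,b) \<noteq> (e,f)"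
    "\<not> tri (a,b) (c,d) (e,f)"
  shows "K (Q (T a) (T b)) (Q (T c) (T d)) (Q (T e) (T f)) \<noteq> 0"
proof -
  define N where "N = Suc (b + d + f)"
  have v: "valid N a b c d e f" using assms by (auto simp: valid_def N_def)
  then have "K (Q (sq N a) (sq N b)) (Q (sq N c) (sq N d)) (Q (sq N e) (sq N f)) \<noteq> 0"
    using good_sq[of N] by (auto simp: good_def)
  moreover have "a < N" "b < N" "c < N" "d < N" "e < N" "f < N" using v by (auto simp: valid_def)
  ultimately show ?thesis by (simp add: sq_T)
qed



theorem theorem1p1:
  shows "\<exists>A :: (real^2) set. infinite A \<and>
    (\<forall>P. P \<subseteq> A \<and> finite P \<and> card P \<ge> 1 \<longrightarrow>
        (\<exists>P'. P' \<subseteq> P \<and> 2 * card P' \<ge> card P \<and> no_three_collinear P')) \<and>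
    \<not> (\<exists>m::nat. \<exists>c :: real^2 \<Rightarrow> nat. (\<forall>x\<in>A. c x < m) \<and>
          (\<forall>i<m. no_three_collinear {x\<in>A. c x = i}))"
proof -
  define \<phi> where "\<phi> = (\<lambda>e::nat\<times>nat. Q (T (fst e)) (T (snd e)))"
  define D where "D = {e::nat\<times>nat. fst e < snd e}"
  define A where "A = \<phi> ` D"
  have injT: "T i = T j \<longleftrightarrow> i = j" for i j using T_inj by (auto simp: inj_def)
  have \<phi>inj: "inj_on \<phi> D"
  proof (rule inj_onI)
    fix e1 e2 assume h: "e1 \<in> D" "e2 \<in> D" "\<phi> e1 = \<phi> e2"
    then have "T (fst e1) = T (fst e2) \<and> T (snd e1) = T (snd e2) \<or>
               T (fst e1) = T (snd e2) \<and> T (snd e1) = T (fst e2)"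
      by (simp only: \<phi>_def Q_eq)
    then have "fst e1 = fst e2 \<and> snd e1 = snd e2 \<or> fst e1 = snd e2 \<and> snd e1 = fst e2"
      by (simp only: injT)
    then show "e1 = e2" using h(1,2) by (auto simp: D_def prod_eq_iff)
  qed
  have Dinf: "infinite D"
  proof -
    have "range (\<lambda>k. (0::nat, Suc k)) \<subseteq> D" by (auto simp: D_def)
    moreover have "infinite (range (\<lambda>k. (0::nat, Suc k)))"
      by (rule range_inj_infinite) (simp add: inj_def)
    ultimately show ?thesis using infinite_super by blast
  qed
  have Ainf: "infinite A" unfolding A_def using Dinf \<phi>inj finite_image_iff by blast
  have P1: "\<exists>P'. P' \<subseteq> P \<and> 2 * card P' \<ge> card P \<and> no_three_collinear P'"
    if PA: "P \<subseteq> A" and Pfin: "finite P" for P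
  proof -
    define E where "E = {e\<in>D. \<phi> e \<in> P}"
    have PE: "P = \<phi> ` E" using PA by (auto simp: E_def A_def)
    have injE: "inj_on \<phi> E" using \<phi>inj by (rule inj_on_subset) (auto simp: E_def)
    have Efin: "finite E" using Pfin PE injE finite_image_iff by blast
    define V where "V = fst ` E \<union> snd ` E"
    have Vfin: "finite V" using Efin by (simp add: V_def)
    have EV: "E \<subseteq> V \<times> V" by (force simp: V_def)
    have noloop: "\<forall>e\<in>E. fst e \<noteq> snd e" by (auto simp: E_def D_def)
    obtain S where S: "card E \<le> 2 * card {e\<in>E. cr S e}"
      using cut_lemma[OF Vfin EV noloop] by blast
    define E' where "E' = {e\<in>E. cr S e}"
    define P' where "P' = \<phi> ` E'"
    have cP: "card P = card E" using PE injE card_image by blast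
    have cP': "card P' = card E'" unfolding P'_def
      by (rule card_image) (rule inj_on_subset[OF injE], auto simp: E'_def)
    have sub: "P' \<subseteq> P" using PE by (auto simp: P'_def E'_def)
    have ntc: "no_three_collinear P'"
      unfolding no_three_collinear_def
    proof (intro ballI impI)
      fix x y z assume xyz: "x \<in> P'" "y \<in> P'" "z \<in> P'" "x \<noteq> y \<and> y \<noteq> z \<and> x \<noteq> z"
      obtain a b where ab: "(a,b) \<in> E'" "x = Q (T a) (T b)" using xyz(1) by (auto simp: P'_def \<phi>_def)
      obtain c d where cd: "(c,d) \<in> E'" "y = Q (T c) (T d)" using xyz(2) by (auto simp: P'_def \<phi>_def)
      obtain e f where ef: "(e,f) \<in> E'" "z = Q (T e) (T f)" using xyz(3) by (auto simp: P'_def \<phi>_def)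
      have lt: "a < b" "c < d" "e < f" using ab cd ef by (auto simp: E'_def E_def D_def)
      have dis: "(a,b) \<noteq> (c,d)" "(c,d) \<noteq> (e,f)" "(a,b) \<noteq> (e,f)"
        using xyz(4) ab cd ef by auto
      have ntri: "\<not> tri (a,b) (c,d) (e,f)"
      proof
        assume "tri (a,b) (c,d) (e,f)"
        then obtain u v w where uvw: "{(a,b), (c,d), (e,f)} = {(u,v), (v,w), (u,w)}"
          unfolding tri_def by blast
        have "(u,v) \<in> E'" "(v,w) \<in> E'" "(u,w) \<in> E'"
          using ab(1) cd(1) ef(1) uvw by (metis insertCI insertE singletonD)+
        then have "cr S (u,v)" "cr S (v,w)" "cr S (u,w)" by (auto simp: E'_def)
        then show False by (auto simp: cr_def)
      qed
      have "K x y z \<noteq> 0" using T_gen[OF lt dis ntri] ab cd ef by simp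
      then show "\<not> collinear {x, y, z}" by (simp add: col2)
    qed
    show ?thesis
      using sub ntc S cP cP' by (intro exI[of _ P']) (simp add: E'_def)
  qed
  have P2: False if m: "\<forall>x\<in>A. c x < m" and nc: "\<forall>i<m. no_three_collinear {x\<in>A. c x = i}"
    for m :: nat and c :: "real^2 \<Rightarrow> nat"
  proof -
    define f where "f X = c (Q (T (Min X)) (T (Max X)))" for X :: "nat set"
    have fxy: "f {x, y} = c (Q (T x) (T y))" if "x < y" for x y
      using that by (simp add: f_def)
    have inA: "Q (T x) (T y) \<in> A" if "x < y" for x y
      using that by (auto simp: A_def \<phi>_def D_def image_def intro!: bexI[of _ "(x,y)"])
    have part: "\<forall>x\<in>(UNIV::nat set). \<forall>y\<in>UNIV. x \<noteq> y \<longrightarrow> f {x, y} < m"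
    proof (intro ballI impI)
      fix x y :: nat assume "x \<noteq> y"
      then consider "x < y" | "y < x" by linarith
      then show "f {x, y} < m"
      proof cases
        case 1 then show ?thesis using fxy inA m by simp
      next
        case 2 then show ?thesis using fxy[of y x] inA[of y x] m by (simp add: insert_commute)
      qed
    qed
    obtain Y t0 where Y: "infinite Y" "t0 < m" "\<forall>x\<in>Y. \<forall>y\<in>Y. x \<noteq> y \<longrightarrow> f {x, y} = t0"
      using Ramsey2[of "UNIV::nat set" f m] part by auto
    obtain x where x: "x \<in> Y" using Y(1) by (metis finite.emptyI ex_in_conv)
    obtain y where y: "y \<in> Y" "x < y" using Y(1) by (metis infinite_nat_iff_unbounded)
    obtain z where z: "z \<in> Y" "y < z" using Y(1) by (metis infinite_nat_iff_unbounded)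
    define p1 where "p1 = Q (T x) (T y)"
    define p2 where "p2 = Q (T y) (T z)"
    define p3 where "p3 = Q (T x) (T z)"
    have c1: "c p1 = t0" using Y(3) x y fxy[of x y] by (auto simp: p1_def)
    have c2: "c p2 = t0" using Y(3) y z fxy[of y z] by (auto simp: p2_def)
    have c3: "c p3 = t0" using Y(3) x y z fxy[of x z] by (auto simp: p3_def)
    have in123: "p1 \<in> {x\<in>A. c x = t0}" "p2 \<in> {x\<in>A. c x = t0}" "p3 \<in> {x\<in>A. c x = t0}"
      using c1 c2 c3 inA y z by (auto simp: p1_def p2_def p3_def)
    have ne: "p1 \<noteq> p2" "p2 \<noteq> p3" "p1 \<noteq> p3"
      using y z by (auto simp: p1_def p2_def p3_def Q_eq injT)
    have "collinear {p1, p2, p3}" by (simp add: col2 p1_def p2_def p3_def K_tri)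
    then show False using nc Y(2) in123 ne unfolding no_three_collinear_def by blast
  qed
  show ?thesis
    using Ainf P1 P2 by blast
qed


end
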